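(* Let $\bm A\in\mathbb R^{m\times n}$, $\bm D\in\mathbb R^{n\times d}$ with $\bm D\bm D^\top=\bm I_n$, $0<\alpha\le1$, and let $s\ge2$ be an integer. Let $\bm h,\bm x\in\mathbb R^n$, let $S$ be an index set of $s$ largest-magnitude entries of $\bm D^\top\bm h$ and $T$ an index set of $s$ largest-magnitude entries of $\bm D^\top\bm x$, and assume $$\|\bm D_{S^c}^\top\bm h\|_1-\alpha\|\bm D_{S^c}^\top\bm h\|_2\le a\|\bm D_S^\top\bm h\|_1+b\|\bm D_S^\top\bm h\|_2+c\|\bm D_{T^c}^\top\bm x\|_1+\eta\|\bm A\bm h\|_2+\gamma$$ for constants $a>0$, $b,c,\eta,\gamma\ge0$ with $(a-1)\sqrt s+(b+1)\ge0$. Then for every $\bar\varepsilon>0$, $$\|\bm D_{S^c}^\top\bm h\|_2\le\Bigg(\sqrt{\frac{a\sqrt s+b}{\sqrt s}+\frac{\alpha^2}{4s}}+\frac{\alpha+\bar\varepsilon}{2\sqrt s}\Bigg)\|\bm D_S^\top\bm h\|_2+\frac1{2\bar\varepsilon}\big(c\|\bm D_{T^c}^\top\bm x\|_1+\eta\|\bm A\bm h\|_2+\gamma\big).$$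
   Context: For an index set $S\subseteq\{1,\dots,d\}$, $S^c$ is its complement and $\bm D_S$ denotes $\bm D$ with all columns not indexed by $S$ set to zero (so $\bm D_S^\top\bm h$ is $\bm D^\top\bm h$ with entries outside $S$ set to zero). *)

theory Defs
  imports "HOL-Analysis.Analysis"
begin

text \<open>v_S: the vector v with all entries outside S set to zero
  (so restr S (transpose D *v h) is D_S^T h).\<close>
definition restr :: "'d set \<Rightarrow> real^'d \<Rightarrow> real^'d" where
  "restr S v = (\<chi> i. if i \<in> S then v $ i else 0)"

text \<open>The l1 norm; the l2 norm is the library's norm on real^'d.\<close>
definition norm1 :: "real^'d \<Rightarrow> real" where
  "norm1 v = (\<Sum>i\<in>UNIV. \<bar>v $ i\<bar>)"

definition largest_idx :: "nat \<Rightarrow> real^'d \<Rightarrow> 'd set \<Rightarrow> bool" where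
  "largest_idx s v S \<longleftrightarrow> card S = s \<and>
     (\<forall>i\<in>S. \<forall>j\<in>- S. \<bar>v $ j\<bar> \<le> \<bar>v $ i\<bar>)"

end

theory Submission
  imports Defs
begin

lemma norm_sq_vec: "(norm (u::real^'d))^2 = (\<Sum>i\<in>UNIV. (u$i)^2)"
  by (simp add: norm_vec_def L2_set_def sum_nonneg)

lemma norm1_le: "norm1 (restr S (v::real^'d)) \<le> sqrt (card S) * norm (restr S v)"
proof -
  let ?g = "\<lambda>i::'d. if i \<in> S then 1 else (0::real)"
  have "norm1 (restr S v) = (\<Sum>i\<in>UNIV. \<bar>norm (restr S v $ i)\<bar> * \<bar>?g i\<bar>)"
    unfolding norm1_def by (intro sum.cong) (auto simp: restr_def)
  also have "\<dots> \<le> L2_set (\<lambda>i. norm (restr S v $ i)) UNIV * L2_set ?g UNIV"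
    by (rule L2_set_mult_ineq)
  also have "L2_set ?g UNIV = sqrt (card S)"
  proof -
    have "(\<Sum>i\<in>UNIV. (?g i)^2) = (\<Sum>i\<in>UNIV. if i \<in> S then 1 else (0::real))"
      by (intro sum.cong) auto
    also have "\<dots> = card S" by (simp add: sum.If_cases)
    finally show ?thesis by (simp add: L2_set_def)
  qed
  finally show ?thesis by (simp add: norm_vec_def mult.commute)
qed

lemma key_sq:
  assumes S: "largest_idx s (v::real^'d) S" and s: "s > 0"
  shows "(norm (restr (- S) v))^2 \<le> norm1 (restr S v) / s * norm1 (restr (- S) v)"
proof -
  let ?M = "norm1 (restr S v) / s"
  have cS: "card S = s" using S by (simp add: largest_idx_def)
  have bnd: "\<bar>v$i\<bar> \<le> ?M" if "i \<notin> S" for i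
  proof -
    have "(\<Sum>j\<in>S. \<bar>v$i\<bar>) \<le> (\<Sum>j\<in>S. \<bar>v$j\<bar>)"
      using S that by (intro sum_mono) (auto simp: largest_idx_def)
    also have "\<dots> = norm1 (restr S v)"
      unfolding norm1_def restr_def
      by (simp add: if_distrib[where f=abs] sum.If_cases cong: if_cong)
    finally have "s * \<bar>v$i\<bar> \<le> norm1 (restr S v)" using cS by simp
    thus ?thesis using s by (simp add: field_simps)
  qed
  have "(norm (restr (- S) v))^2 = (\<Sum>i\<in>UNIV. (restr (- S) v $ i)^2)" by (rule norm_sq_vec)
  also have "\<dots> \<le> (\<Sum>i\<in>UNIV. ?M * \<bar>restr (- S) v $ i\<bar>)"
  proof (intro sum_mono)
    fix i
    show "(restr (- S) v $ i)^2 \<le> ?M * \<bar>restr (- S) v $ i\<bar>"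
    proof (cases "i \<in> S")
      case False
      have "\<bar>v$i\<bar> * \<bar>v$i\<bar> \<le> ?M * \<bar>v$i\<bar>" using bnd[OF False] by (intro mult_right_mono) simp_all
      moreover have "(v$i)^2 = \<bar>v$i\<bar> * \<bar>v$i\<bar>" by (simp add: power2_eq_square abs_mult_self_eq)
      ultimately show ?thesis using False by (simp add: restr_def)
    qed (simp add: restr_def)
  qed
  also have "\<dots> = ?M * norm1 (restr (- S) v)" by (simp add: norm1_def sum_distrib_left)
  finally show ?thesis .
qed

theorem proposition3:
  fixes A :: "real^'n^'m" and D :: "real^'d^'n"
    and h x :: "real^'n" and S T :: "'d set" and s :: nat
    and \<alpha> a b c \<eta> \<gamma> \<epsilon> :: real
  assumes DD: "D ** transpose D = mat 1"
    and alpha: "0 < \<alpha>" "\<alpha> \<le> 1"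
    and s2: "s \<ge> 2"
    and S: "largest_idx s (transpose D *v h) S"
    and T: "largest_idx s (transpose D *v x) T"
    and cst: "a > 0" "b \<ge> 0" "c \<ge> 0" "\<eta> \<ge> 0" "\<gamma> \<ge> 0"
    and ab: "(a - 1) * sqrt s + (b + 1) \<ge> 0"
    and hyp: "norm1 (restr (- S) (transpose D *v h)) - \<alpha> * norm (restr (- S) (transpose D *v h))
       \<le> a * norm1 (restr S (transpose D *v h)) + b * norm (restr S (transpose D *v h))
         + c * norm1 (restr (- T) (transpose D *v x)) + \<eta> * norm (A *v h) + \<gamma>"
    and eps: "\<epsilon> > 0"
  shows "norm (restr (- S) (transpose D *v h))
    \<le> (sqrt ((a * sqrt s + b) / sqrt s + \<alpha>^2 / (4 * s)) + (\<alpha> + \<epsilon>) / (2 * sqrt s))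
         * norm (restr S (transpose D *v h))
       + 1 / (2 * \<epsilon>) * (c * norm1 (restr (- T) (transpose D *v x)) + \<eta> * norm (A *v h) + \<gamma>)"
proof -
  define v where "v = transpose D *v h"
  define X where "X = norm (restr (- S) v)"
  define Y where "Y = norm (restr S v)"
  define U where "U = norm1 (restr (- S) v)"
  define W where "W = norm1 (restr S v)"
  define R where "R = c * norm1 (restr (- T) (transpose D *v x)) + \<eta> * norm (A *v h) + \<gamma>"
  define t where "t = sqrt s"
  have s0: "s > 0" using s2 by simp
  have t0: "t > 0" using s0 by (simp add: t_def)
  have ts: "t^2 = s" by (simp add: t_def)
  have X0: "X \<ge> 0" and Y0: "Y \<ge> 0" by (simp_all add: X_def Y_def)
  have U0: "U \<ge> 0" and W0: "W \<ge> 0" by (simp_all add: U_def W_def norm1_def sum_nonneg)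
  have R0: "R \<ge> 0" unfolding R_def using cst
    by (intro add_nonneg_nonneg mult_nonneg_nonneg) (simp_all add: norm1_def sum_nonneg)
  have hypU: "U \<le> \<alpha> * X + a * W + b * Y + R"
    using hyp unfolding U_def X_def W_def Y_def R_def v_def by linarith
  have cS: "card S = s" using S by (simp add: largest_idx_def)
  have WY: "W \<le> t * Y" using norm1_le[of S v] cS by (simp add: W_def Y_def t_def)
  have sq: "X^2 \<le> W / s * U" using key_sq[OF S[folded v_def] s0] by (simp add: X_def W_def U_def)
  have M: "W / s \<le> Y / t"
  proof -
    have "W / s \<le> t * Y / s" using WY s0 by (simp add: divide_right_mono)
    also have "t * Y / s = Y / t" using t0 ts s0 by (simp add: field_simps power2_eq_square)
    finally show ?thesis .
  qed
  have "X^2 \<le> Y / t * U" using sq M U0 mult_right_mono order_trans by blast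
  also have "\<dots> \<le> Y / t * (\<alpha> * X + a * W + b * Y + R)"
    using hypU Y0 t0 by (intro mult_left_mono) simp_all
  also have "\<dots> \<le> Y / t * (\<alpha> * X + a * (t * Y) + b * Y + R)"
    using WY cst Y0 t0 by (intro mult_left_mono) (simp_all add: mult_left_mono)
  finally have Q: "X^2 \<le> \<alpha> * Y / t * X + (a * t + b) / t * Y^2 + Y * R / t"
    using t0 by (simp add: field_simps power2_eq_square)
  define K where "K = (a * t + b) / t"
  have K0: "K \<ge> 0" using cst t0 by (simp add: K_def)
  define p where "p = \<alpha> * Y / t"
  define q where "q = sqrt (K + \<alpha>^2 / (4 * s)) * Y"
  have q0: "q \<ge> 0" using K0 Y0 s0 by (simp add: q_def)
  have qsq: "q^2 = p^2 / 4 + K * Y^2"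
  proof -
    have "q^2 = (K + \<alpha>^2 / (4 * s)) * Y^2" using K0 s0
      by (simp add: q_def power_mult_distrib)
    thus ?thesis using ts t0 by (simp add: p_def field_simps power2_eq_square)
  qed
  define e1 where "e1 = \<epsilon> * Y / (2 * t)"
  define e2 where "e2 = R / (2 * \<epsilon>)"
  have e10: "e1 \<ge> 0" using eps Y0 t0 by (simp add: e1_def)
  have e20: "e2 \<ge> 0" using eps R0 by (simp add: e2_def)
  have e12: "4 * e1 * e2 = Y * R / t" using eps t0 by (simp add: e1_def e2_def field_simps)
  define Z where "Z = q + e1 + e2"
  have Z0: "Z \<ge> 0" using q0 e10 e20 by (simp add: Z_def)
  have Zsq: "Z^2 \<ge> q^2 + Y * R / t"
  proof -
    have "Z^2 = q^2 + 2*q*(e1+e2) + (e1-e2)^2 + 4*e1*e2"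
      by (simp add: Z_def power2_eq_square algebra_simps)
    moreover have "2*q*(e1+e2) \<ge> 0" using q0 e10 e20 by simp
    moreover have "(e1-e2)^2 \<ge> 0" by simp
    ultimately show ?thesis using e12 by linarith
  qed
  have main: "X \<le> p / 2 + Z"
  proof (rule ccontr)
    assume "\<not> ?thesis"
    hence lt: "Z < X - p / 2" by simp
    have "Z * Z \<le> Z * (X - p/2)" using lt Z0 by (simp add: mult_left_mono)
    also have "\<dots> < (X - p/2) * (X - p/2)" using lt Z0 by (simp add: mult_strict_right_mono)
    finally have "Z^2 < (X - p/2)^2" by (simp add: power2_eq_square)
    hence "q^2 + Y * R / t < (X - p/2)^2" using Zsq by linarith
    hence "p^2/4 + K * Y^2 + Y * R / t < X^2 - p * X + p^2/4"
      using qsq by (simp add: power2_eq_square algebra_simps)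
    thus False using Q by (simp add: p_def K_def algebra_simps)
  qed
  have "p / 2 + Z = (sqrt ((a * t + b) / t + \<alpha>^2 / (4 * s)) + (\<alpha> + \<epsilon>) / (2 * t)) * Y + 1 / (2 * \<epsilon>) * R"
    using t0 eps by (simp add: Z_def p_def q_def e1_def e2_def K_def field_simps)
  with main show ?thesis
    by (simp add: X_def Y_def v_def R_def t_def)
qed

end
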